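(* Let $(X,\|\cdot\|)$ be a normed linear space over $\mathbb{R}$ or $\mathbb{C}$, let $x_1,\dots,x_n\in X$, $a\in X\setminus\{0\}$, and let $p_1,\dots,p_n\ge 0$ with $\sum_{j=1}^n p_j=1$. Then $$\Big\|\sum_{j=1}^n p_jx_j\Big\|\,\|a\|+\frac12\sum_{j=1}^n p_j\|x_j-a\|^2\ \ge\ \frac12\|a\|^2.$$ The constant $\tfrac12$ on the right-hand side is best possible: if $X\ne\{0\}$, there is no constant $D>\tfrac12$ such that $\big\|\sum_{j=1}^n p_jx_j\big\|\,\|a\|+\frac12\sum_{j=1}^n p_j\|x_j-a\|^2\ge D\|a\|^2$ holds for all $n\ge1$, all $x_j\in X$, all $p_j\ge0$ with $\sum_j p_j=1$ and all $a\in X\setminus\{0\}$. *)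

theory Defs
  imports "HOL-Analysis.Analysis"
begin

end

theory Submission
  imports Defs
begin

lemma jensen_sq:
  fixes p s :: "nat \<Rightarrow> real"
  assumes "\<forall>j\<in>A. p j \<ge> 0" "(\<Sum>j\<in>A. p j) = 1" "finite A"
  shows "(\<Sum>j\<in>A. p j * s j) ^ 2 \<le> (\<Sum>j\<in>A. p j * (s j)^2)"
proof -
  define m where "m = (\<Sum>j\<in>A. p j * s j)"
  have "0 \<le> (\<Sum>j\<in>A. p j * (s j - m)^2)"
    using assms(1) by (intro sum_nonneg) auto
  also have "\<dots> = (\<Sum>j\<in>A. p j * (s j)^2) - 2 * m * (\<Sum>j\<in>A. p j * s j) + m^2 * (\<Sum>j\<in>A. p j)"
    by (simp add: power2_eq_square algebra_simps sum.distrib sum_subtractf sum_distrib_left sum_distrib_right)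
  also have "\<dots> = (\<Sum>j\<in>A. p j * (s j)^2) - m^2"
    using assms(2) by (simp add: m_def power2_eq_square)
  finally show ?thesis by (simp add: m_def)
qed

lemma part1:
  fixes x :: "nat \<Rightarrow> 'a::real_normed_vector"
  assumes "\<forall>j\<in>{1..n}. p j \<ge> 0" "(\<Sum>j=1..n. p j) = 1"
  shows "norm (\<Sum>j=1..n. p j *\<^sub>R x j) * norm a
              + (1/2) * (\<Sum>j=1..n. p j * (norm (x j - a))\<^sup>2) \<ge> (1/2) * (norm a)\<^sup>2"
proof -
  define y where "y = (\<Sum>j=1..n. p j *\<^sub>R x j)"
  define t where "t = norm (y - a)"
  have "y - a = (\<Sum>j=1..n. p j *\<^sub>R (x j - a))"
    using assms(2) by (simp add: y_def scaleR_diff_right sum_subtractf scaleR_sum_left[symmetric])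
  hence "t \<le> (\<Sum>j=1..n. norm (p j *\<^sub>R (x j - a)))"
    unfolding t_def by (metis norm_sum)
  also have "\<dots> = (\<Sum>j=1..n. p j * norm (x j - a))"
    using assms(1) by (intro sum.cong) auto
  finally have t1: "t \<le> (\<Sum>j=1..n. p j * norm (x j - a))" .
  have t0: "0 \<le> t" by (simp add: t_def)
  have "t^2 \<le> (\<Sum>j=1..n. p j * norm (x j - a))^2"
    using t1 t0 by (simp add: power_mono)
  also have "\<dots> \<le> (\<Sum>j=1..n. p j * (norm (x j - a))^2)"
    by (rule jensen_sq[OF assms]) simp
  finally have t2: "t^2 \<le> (\<Sum>j=1..n. p j * (norm (x j - a))^2)" .
  have ny: "norm y \<ge> norm a - t"
    unfolding t_def using norm_triangle_ineq2[of a y] norm_minus_commute[of y a] by simp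
  have "norm y * norm a \<ge> (norm a - t) * norm a"
    using ny by (simp add: mult_right_mono)
  moreover have "(norm a - t) * norm a + t^2/2 \<ge> (norm a)^2/2"
  proof -
    have "0 \<le> (norm a - t)^2" by simp
    thus ?thesis by (simp add: power2_diff power2_eq_square field_simps)
  qed
  ultimately have "norm y * norm a + (1/2) * (\<Sum>j=1..n. p j * (norm (x j - a))\<^sup>2) \<ge> (1/2) * (norm a)\<^sup>2"
    using t2 by linarith
  thus ?thesis by (simp only: y_def)
qed

theorem theorem2p1:
  fixes dummy :: "'a::real_normed_vector"
  shows "(\<forall>(n::nat) (x::nat \<Rightarrow> 'a) (p::nat \<Rightarrow> real) (a::'a).
            a \<noteq> 0 \<and> (\<forall>j\<in>{1..n}. p j \<ge> 0) \<and> (\<Sum>j=1..n. p j) = 1 \<longrightarrow>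
            norm (\<Sum>j=1..n. p j *\<^sub>R x j) * norm a
              + (1/2) * (\<Sum>j=1..n. p j * (norm (x j - a))\<^sup>2) \<ge> (1/2) * (norm a)\<^sup>2)
       \<and> ((\<exists>v::'a. v \<noteq> 0) \<longrightarrow>
            \<not> (\<exists>D::real. D > 1/2 \<and>
                 (\<forall>(n::nat) (x::nat \<Rightarrow> 'a) (p::nat \<Rightarrow> real) (a::'a).
                    n \<ge> 1 \<and> a \<noteq> 0 \<and> (\<forall>j\<in>{1..n}. p j \<ge> 0) \<and> (\<Sum>j=1..n. p j) = 1 \<longrightarrow>
                    norm (\<Sum>j=1..n. p j *\<^sub>R x j) * norm a
                      + (1/2) * (\<Sum>j=1..n. p j * (norm (x j - a))\<^sup>2) \<ge> D * (norm a)\<^sup>2)))"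
proof (intro conjI impI allI)
  fix n and x :: "nat \<Rightarrow> 'a" and p :: "nat \<Rightarrow> real" and a :: 'a
  assume A: "a \<noteq> 0 \<and> (\<forall>j\<in>{1..n}. p j \<ge> 0) \<and> (\<Sum>j=1..n. p j) = 1"
  show "norm (\<Sum>j=1..n. p j *\<^sub>R x j) * norm a
              + (1/2) * (\<Sum>j=1..n. p j * (norm (x j - a))\<^sup>2) \<ge> (1/2) * (norm a)\<^sup>2"
    by (rule part1) (use A in auto)
next
  assume "\<exists>v::'a. v \<noteq> 0"
  then obtain v :: 'a where v: "v \<noteq> 0" by blast
  show "\<not> (\<exists>D::real. D > 1/2 \<and>
                 (\<forall>(n::nat) (x::nat \<Rightarrow> 'a) (p::nat \<Rightarrow> real) (a::'a).
                    n \<ge> 1 \<and> a \<noteq> 0 \<and> (\<forall>j\<in>{1..n}. p j \<ge> 0) \<and> (\<Sum>j=1..n. p j) = 1 \<longrightarrow>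
                    norm (\<Sum>j=1..n. p j *\<^sub>R x j) * norm a
                      + (1/2) * (\<Sum>j=1..n. p j * (norm (x j - a))\<^sup>2) \<ge> D * (norm a)\<^sup>2))"
  proof (rule notI, elim exE conjE)
    fix D :: real
    assume D: "D > 1/2" and H: "\<forall>(n::nat) (x::nat \<Rightarrow> 'a) (p::nat \<Rightarrow> real) (a::'a).
                    n \<ge> 1 \<and> a \<noteq> 0 \<and> (\<forall>j\<in>{1..n}. p j \<ge> 0) \<and> (\<Sum>j=1..n. p j) = 1 \<longrightarrow>
                    norm (\<Sum>j=1..n. p j *\<^sub>R x j) * norm a
                      + (1/2) * (\<Sum>j=1..n. p j * (norm (x j - a))\<^sup>2) \<ge> D * (norm a)\<^sup>2"
    have le: "(1/2) * (norm v)^2 \<ge> D * (norm v)^2"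
      using H[rule_format, of 1 v "\<lambda>_. 1" "\<lambda>_. 0"] v by simp
    have pos: "(norm v)^2 > 0" using v by simp
    have "(1/2) * (norm v)^2 < D * (norm v)^2"
      using D pos by (rule mult_strict_right_mono)
    with le show False by linarith
  qed
qed

end
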